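(* For every integer $n\ge 3$, the set $\{2,n\}$ is not a $\delta$-set.
   Context: All graphs are finite and simple; $d(u,v)$ denotes the usual graph distance (infinite between different components). For a set $J$ of nonnegative integers, a distance $J$-labeling of $G$ is a function $f:V(G)\to J$ with $f(V(G))=J$ such that whenever two distinct vertices $u,v$ satisfy $f(u)=f(v)=k$, we have $d(u,v)=k$. It is proper if every $k\in J\setminus\{0\}$ is the label of at least two vertices. A finite set $\Sigma$ of nonnegative integers is a $\delta$-set if there exists a graph admitting a proper distance $\Sigma$-labeling. *)

theory Defs
  imports Main "HOL-Library.Extended_Nat"
begin

definition simple_graph :: "'a set \<Rightarrow> ('a \<Rightarrow> 'a \<Rightarrow> bool) \<Rightarrow> bool" where
  "simple_graph V E \<longleftrightarrow> finite V \<and> (\<forall>u v. E u v \<longrightarrow> u \<in> V \<and> v \<in> V) \<and>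
     (\<forall>u v. E u v \<longrightarrow> E v u) \<and> (\<forall>u. \<not> E u u)"

definition walk_of_length :: "'a set \<Rightarrow> ('a \<Rightarrow> 'a \<Rightarrow> bool) \<Rightarrow> 'a \<Rightarrow> 'a \<Rightarrow> nat \<Rightarrow> bool" where
  "walk_of_length V E u v n \<longleftrightarrow> (\<exists>p :: nat \<Rightarrow> 'a. p 0 = u \<and> p n = v \<and>
     (\<forall>i\<le>n. p i \<in> V) \<and> (\<forall>i<n. E (p i) (p (Suc i))))"

text \<open>Graph distance; infinite (\<infinity>) when there is no walk.\<close>
definition gdist :: "'a set \<Rightarrow> ('a \<Rightarrow> 'a \<Rightarrow> bool) \<Rightarrow> 'a \<Rightarrow> 'a \<Rightarrow> enat" where
  "gdist V E u v = (INF n \<in> {n. walk_of_length V E u v n}. enat n)"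

definition distance_labeling ::
  "'a set \<Rightarrow> ('a \<Rightarrow> 'a \<Rightarrow> bool) \<Rightarrow> nat set \<Rightarrow> ('a \<Rightarrow> nat) \<Rightarrow> bool" where
  "distance_labeling V E J f \<longleftrightarrow> f ` V = J \<and>
     (\<forall>u\<in>V. \<forall>v\<in>V. u \<noteq> v \<longrightarrow> f u = f v \<longrightarrow> gdist V E u v = enat (f u))"

definition proper_distance_labeling ::
  "'a set \<Rightarrow> ('a \<Rightarrow> 'a \<Rightarrow> bool) \<Rightarrow> nat set \<Rightarrow> ('a \<Rightarrow> nat) \<Rightarrow> bool" where
  "proper_distance_labeling V E J f \<longleftrightarrow> distance_labeling V E J f \<and>
     (\<forall>k \<in> J - {0}. \<exists>u\<in>V. \<exists>v\<in>V. u \<noteq> v \<and> f u = k \<and> f v = k)"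

text \<open>Vertices are taken from nat (every finite graph is isomorphic
  to one on natural-number vertices).\<close>
definition delta_set :: "nat set \<Rightarrow> bool" where
  "delta_set S \<longleftrightarrow> finite S \<and>
     (\<exists>(V :: nat set) E f. simple_graph V E \<and> proper_distance_labeling V E S f)"

end

theory Submission
  imports Defs
begin

lemma walk_sub:
  assumes "\<forall>i\<le>n. p i \<in> V" "\<forall>i<n. E (p i) (p (Suc i))" "a \<le> b" "b \<le> n"
  shows "walk_of_length V E (p a) (p b) (b - a)"
  unfolding walk_of_length_def
  by (rule exI[of _ "\<lambda>i. p (i + a)"]) (use assms in auto)

lemma gdist_le: "walk_of_length V E u v m \<Longrightarrow> gdist V E u v \<le> enat m"
  unfolding gdist_def by (rule INF_lower) simp

lemma gdist_walk:
  assumes "gdist V E u v = enat m" shows "walk_of_length V E u v m"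
proof -
  let ?S = "{n. walk_of_length V E u v n}"
  have ne: "?S \<noteq> {}"
  proof
    assume "?S = {}"
    then have "gdist V E u v = \<infinity>" unfolding gdist_def by (simp add: Inf_enat_def)
    with assms show False by simp
  qed
  define k where "k = (LEAST n. n \<in> ?S)"
  have kS: "k \<in> ?S" using ne unfolding k_def by (metis LeastI ex_in_conv)
  have "gdist V E u v \<le> enat k" using kS gdist_le by auto
  moreover have "enat k \<le> gdist V E u v"
    unfolding gdist_def by (rule INF_greatest) (simp add: k_def Least_le)
  ultimately have "enat k = enat m" using assms by simp
  then show ?thesis using kS by simp
qed

theorem mainTheorem11:
  fixes n :: nat
  assumes "n \<ge> 3"
  shows "\<not> delta_set {2, n}"
proof
  assume "delta_set {2, n}"
  then obtain V :: "nat set" and E f where G: "simple_graph V E"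
    and P: "proper_distance_labeling V E {2,n} f"
    unfolding delta_set_def by blast
  have img: "f ` V = {2,n}" and dl: "\<And>u v. u\<in>V \<Longrightarrow> v\<in>V \<Longrightarrow> u \<noteq> v \<Longrightarrow> f u = f v \<Longrightarrow> gdist V E u v = enat (f u)"
    using P unfolding proper_distance_labeling_def distance_labeling_def by auto
  have "n \<in> {2,n} - {0}" using assms by auto
  then obtain u v where uv: "u\<in>V" "v\<in>V" "u \<noteq> v" "f u = n" "f v = n"
    using P unfolding proper_distance_labeling_def by blast
  have "gdist V E u v = enat n" using dl uv by simp
  then obtain p where p: "p 0 = u" "p n = v" "\<forall>i\<le>n. p i \<in> V" "\<forall>i<n. E (p i) (p (Suc i))"
    using gdist_walk[of V E u v n] unfolding walk_of_length_def by blast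
  have irr: "\<And>x. \<not> E x x" using G unfolding simple_graph_def by auto
  have lab: "\<And>x. x \<in> V \<Longrightarrow> f x = 2 \<or> f x = n" using img by auto
  have V1: "p 1 \<in> V" "p 2 \<in> V" using p(3) assms by auto
  have E01: "E (p 0) (p 1)" and E12: "E (p 1) (p 2)" using p(4) assms by (auto simp: numeral_2_eq_2)
  have f1: "f (p 1) = 2"
  proof (rule ccontr)
    assume "f (p 1) \<noteq> 2"
    then have "f (p 1) = n" using lab V1 by blast
    moreover have "p 1 \<noteq> u" using E01 irr p(1) by metis
    ultimately have "gdist V E u (p 1) = enat n" using dl[of u "p 1"] uv V1 by simp
    moreover have "gdist V E u (p 1) \<le> enat 1"
      using gdist_le walk_sub[OF p(3,4), of 0 1] p(1) assms by simp
    ultimately show False using assms by simp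
  qed
  have f2: "f (p 2) = 2"
  proof (rule ccontr)
    assume "f (p 2) \<noteq> 2"
    then have fn: "f (p 2) = n" using lab V1 by blast
    show False
    proof (cases "p 2 = u")
      case True
      have "gdist V E u v \<le> enat (n - 2)"
        using gdist_le walk_sub[OF p(3,4), of 2 n] p(2) True assms by simp
      then show False using \<open>gdist V E u v = enat n\<close> assms by simp
    next
      case False
      then have "gdist V E u (p 2) = enat n" using dl[of u "p 2"] uv V1 fn by simp
      moreover have "gdist V E u (p 2) \<le> enat 2"
        using gdist_le walk_sub[OF p(3,4), of 0 2] p(1) assms by simp
      ultimately show False using assms by simp
    qed
  qed
  have "p 1 \<noteq> p 2" using E12 irr by metis
  then have "gdist V E (p 1) (p 2) = enat 2" using dl[of "p 1" "p 2"] V1 f1 f2 by simp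
  moreover have "gdist V E (p 1) (p 2) \<le> enat 1"
    using gdist_le walk_sub[OF p(3,4), of 1 2] assms by simp
  ultimately show False by simp
qed

end
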